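(* Let $\beta=\pi/4$ and let $F,G_1,G_2$, $X_{\pm\pm}$, $s_{\max}$, $v$, $\bar M$ be as in the context, and $N=(0,0,1)^T$. Let $\theta(\alpha)=\arcsin\left(\frac{-2\sqrt2\sin\alpha\cos\alpha}{1+\cos^2\alpha}\right)$. For every integer $n$ and every $0<\alpha<\pi/4$, $$\bar M^n(0,\alpha)N=\begin{pmatrix}0\\ \sin(4n\theta(\alpha))\\ \cos(4n\theta(\alpha))\end{pmatrix},\qquad \bar M^n(s_{\max},\alpha)\,e^{s_{\max}X_{++}}N=\begin{pmatrix}0\\ \sin((4n+1)\theta(\alpha))\\ \cos((4n+1)\theta(\alpha))\end{pmatrix}.$$
   Context: $F=\cos\alpha\begin{pmatrix}0&-1&0\\1&0&0\\0&0&0\end{pmatrix}$, $G_1=\sin\alpha\sin\beta\begin{pmatrix}0&0&0\\0&0&-1\\0&1&0\end{pmatrix}$, $G_2=\sin\alpha\cos\beta\begin{pmatrix}0&0&-1\\0&0&0\\1&0&0\end{pmatrix}$, and $X_{ab}=F+aG_1+bG_2$ for $a,b\in\{+1,-1\}$. $s_{\max}=\arccos\left(-\frac{\sin^2\alpha}{1+\cos^2\alpha}\right)$. For $s\in[0,s_{\max}]$, $v(s)=\arccos\left[\frac{d-A(s)-B(s)-C(s)}{e-A(s)+B(s)}\right]$ with $A(s)=8\cos\alpha\sin^2\alpha\sin s$, $B(s)=2\sin^2(2\alpha)\cos s$, $C(s)=4\sin^4\alpha\cos(2s)$, $d=\sin^2(2\alpha)$, $e=5+2\cos2\alpha+\cos4\alpha$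 (the duration of interior bang arcs of normal extremals of $\dot x=(F+u_1G_1+u_2G_2)x$ on $S^2$ from $N$ with first bang arc of duration $s$). $\bar M(s,\alpha)=e^{v(s)X_{++}}e^{v(s)X_{-+}}e^{v(s)X_{--}}e^{v(s)X_{+-}}$. *)

theory Defs
  imports "HOL-Analysis.Analysis"
begin

fun mat_pow :: "real^'n^'n \<Rightarrow> nat \<Rightarrow> real^'n^'n" where
  "mat_pow A 0 = mat 1"
| "mat_pow A (Suc k) = A ** mat_pow A k"

definition mat_zpow :: "real^'n^'n \<Rightarrow> int \<Rightarrow> real^'n^'n" where
  "mat_zpow A n = (if 0 \<le> n then mat_pow A (nat n) else mat_pow (matrix_inv A) (nat (- n)))"

definition mat_exp :: "real^'n^'n \<Rightarrow> real^'n^'n" where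
  "mat_exp A = (\<Sum>k. (1 / fact k) *\<^sub>R mat_pow A k)"

definition Fm :: "real \<Rightarrow> real^3^3" where
  "Fm \<alpha> = cos \<alpha> *\<^sub>R vector [vector [0, -1, 0], vector [1, 0, 0], vector [0, 0, 0]]"

definition G1m :: "real \<Rightarrow> real \<Rightarrow> real^3^3" where
  "G1m \<alpha> \<beta> = (sin \<alpha> * sin \<beta>) *\<^sub>R vector [vector [0, 0, 0], vector [0, 0, -1], vector [0, 1, 0]]"

definition G2m :: "real \<Rightarrow> real \<Rightarrow> real^3^3" where
  "G2m \<alpha> \<beta> = (sin \<alpha> * cos \<beta>) *\<^sub>R vector [vector [0, 0, -1], vector [0, 0, 0], vector [1, 0, 0]]"

definition Xm :: "real \<Rightarrow> real \<Rightarrow> real \<Rightarrow> real \<Rightarrow> real^3^3" where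
  "Xm a b \<alpha> \<beta> = Fm \<alpha> + a *\<^sub>R G1m \<alpha> \<beta> + b *\<^sub>R G2m \<alpha> \<beta>"

definition s_max :: "real \<Rightarrow> real" where
  "s_max \<alpha> = arccos (- (sin \<alpha>)\<^sup>2 / (1 + (cos \<alpha>)\<^sup>2))"

definition vdur :: "real \<Rightarrow> real \<Rightarrow> real" where
  "vdur s \<alpha> =
     (let A = 8 * cos \<alpha> * (sin \<alpha>)\<^sup>2 * sin s;
          B = 2 * (sin (2 * \<alpha>))\<^sup>2 * cos s;
          C = 4 * (sin \<alpha>) ^ 4 * cos (2 * s);
          d = (sin (2 * \<alpha>))\<^sup>2;
          e = 5 + 2 * cos (2 * \<alpha>) + cos (4 * \<alpha>)
      in arccos ((d - A - B - C) / (e - A + B)))"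

definition Mbar :: "real \<Rightarrow> real \<Rightarrow> real \<Rightarrow> real^3^3" where
  "Mbar \<beta> s \<alpha> =
     mat_exp (vdur s \<alpha> *\<^sub>R Xm 1 1 \<alpha> \<beta>) ** mat_exp (vdur s \<alpha> *\<^sub>R Xm (-1) 1 \<alpha> \<beta>) **
     mat_exp (vdur s \<alpha> *\<^sub>R Xm (-1) (-1) \<alpha> \<beta>) ** mat_exp (vdur s \<alpha> *\<^sub>R Xm 1 (-1) \<alpha> \<beta>)"

definition Npole :: "real^3" where
  "Npole = vector [0, 0, 1]"

definition theta :: "real \<Rightarrow> real" where
  "theta \<alpha> = arcsin (- 2 * sqrt 2 * sin \<alpha> * cos \<alpha> / (1 + (cos \<alpha>)\<^sup>2))"

end

theory Submission imports Defs begin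


lemma mat_pow_scale: "mat_pow (t *\<^sub>R K) k = t ^ k *\<^sub>R mat_pow K k"
  by (induction k) (simp_all add: matrix_scalar_ac scalar_matrix_assoc[symmetric])

lemma mat_mul_neg: "(A::real^'n^'m) ** (- B) = - (A ** B)"
  by (simp add: matrix_matrix_mult_def vec_eq_iff sum_negf)

lemma mat_pow_K:
  fixes K :: "real^'n^'n"
  assumes K3: "K ** (K ** K) = - K"
  shows "mat_pow K (2*m+1) = (-1)^m *\<^sub>R K \<and> mat_pow K (2*m+2) = (-1)^m *\<^sub>R (K ** K)"
proof (induction m)
  case 0
  then show ?case by simp
next
  case (Suc m)
  have e1: "mat_pow K (2*Suc m+1) = K ** mat_pow K (2*m+2)"
    by (simp add: numeral_eq_Suc)
  have e2: "mat_pow K (2*Suc m+2) = K ** mat_pow K (2*Suc m+1)"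
    by (simp add: numeral_eq_Suc)
  have a: "mat_pow K (2*Suc m+1) = (-1)^Suc m *\<^sub>R K"
    unfolding e1 using Suc by (simp add: matrix_scalar_ac K3 scalar_matrix_assoc[symmetric])
  have b: "mat_pow K (2*Suc m+2) = (-1)^Suc m *\<^sub>R (K ** K)"
    unfolding e2 a by (simp add: mat_mul_neg matrix_scalar_ac scalar_matrix_assoc[symmetric])
  show ?case using a b by blast
qed

lemma exp_term:
  fixes K :: "real^'n^'n"
  assumes K3: "K ** (K ** K) = - K"
  shows "(1 / fact k) *\<^sub>R mat_pow (t *\<^sub>R K) k =
    (if k = 0 then mat 1 + K ** K else 0) + (sin_coeff k * t ^ k) *\<^sub>R K - (cos_coeff k * t ^ k) *\<^sub>R (K ** K)"
proof (cases "k = 0")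
  case True
  then show ?thesis by (simp add: cos_coeff_def sin_coeff_def)
next
  case False
  have "\<exists>m. k = 2*m+1 \<or> k = 2*m+2" using False by presburger
  then obtain m where "k = 2*m+1 \<or> k = 2*m+2" by blast
  then show ?thesis
  proof
    assume k: "k = 2*m+1"
    have "sin_coeff k = (-1)^m / fact k" using k by (simp add: sin_coeff_def)
    moreover have "cos_coeff k = 0" using k by (simp add: cos_coeff_def)
    moreover have "mat_pow (t *\<^sub>R K) k = t^k *\<^sub>R ((-1)^m *\<^sub>R K)"
      unfolding mat_pow_scale using conjunct1[OF mat_pow_K[OF K3, of m]] k by (simp del: mat_pow.simps)
    ultimately show ?thesis using k by (simp del: mat_pow.simps)
  next
    assume k: "k = 2*m+2"
    have "sin_coeff k = 0" using k by (simp add: sin_coeff_def)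
    moreover have "cos_coeff k = (-1)^Suc m / fact k" using k
      by (simp add: cos_coeff_def)
    moreover have "mat_pow (t *\<^sub>R K) k = t^k *\<^sub>R ((-1)^m *\<^sub>R (K ** K))"
      unfolding mat_pow_scale using conjunct2[OF mat_pow_K[OF K3, of m]] k by (simp del: mat_pow.simps)
    ultimately show ?thesis using k by (simp del: mat_pow.simps)
  qed
qed

lemma mat_exp_rodrigues:
  fixes K :: "real^'n^'n"
  assumes K3: "K ** (K ** K) = - K"
  shows "mat_exp (t *\<^sub>R K) = mat 1 + sin t *\<^sub>R K + (1 - cos t) *\<^sub>R (K ** K)"
proof -
  have s1: "(\<lambda>k. if k = 0 then mat 1 + K ** K else 0) sums (mat 1 + K ** K)"
    using sums_single[of 0 "\<lambda>_. mat 1 + K ** K"] by simp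
  have s2: "(\<lambda>k. (sin_coeff k * t ^ k) *\<^sub>R K) sums (sin t *\<^sub>R K)"
    using sums_scaleR_left[OF sin_converges[of t]] by simp
  have s3: "(\<lambda>k. (cos_coeff k * t ^ k) *\<^sub>R (K ** K)) sums (cos t *\<^sub>R (K ** K))"
    using sums_scaleR_left[OF cos_converges[of t]] by simp
  have "(\<lambda>k. (1 / fact k) *\<^sub>R mat_pow (t *\<^sub>R K) k) sums
     (mat 1 + K ** K + sin t *\<^sub>R K - cos t *\<^sub>R (K ** K))"
    unfolding exp_term[OF K3] by (intro sums_add sums_diff s1 s2 s3)
  then show ?thesis unfolding mat_exp_def
    by (simp add: sums_iff algebra_simps)
qed



definition hat :: "real \<Rightarrow> real \<Rightarrow> real \<Rightarrow> real^3^3" where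
  "hat x y z = vector [vector [0, -z, y], vector [z, 0, -x], vector [-y, x, 0]]"

definition rodm :: "real \<Rightarrow> real \<Rightarrow> real \<Rightarrow> real \<Rightarrow> real \<Rightarrow> real^3^3" where
  "rodm x y z c s = vector [
     vector [c + (1-c)*x*x, -s*z + (1-c)*x*y, s*y + (1-c)*x*z],
     vector [s*z + (1-c)*x*y, c + (1-c)*y*y, -s*x + (1-c)*y*z],
     vector [-s*y + (1-c)*x*z, s*x + (1-c)*y*z, c + (1-c)*z*z]]"

lemma Xm_hat: "Xm a b \<alpha> (pi/4) = hat (a * (sin \<alpha> * (sqrt 2/2))) (- b * (sin \<alpha> * (sqrt 2/2))) (cos \<alpha>)"
  by (simp add: Xm_def Fm_def G1m_def G2m_def hat_def sin_45 cos_45 vec_eq_iff forall_3)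

lemma hat_cube:
  assumes "x*x+y*y+z*z=1"
  shows "hat x y z ** (hat x y z ** hat x y z) = - hat x y z"
  using assms
  by (simp add: hat_def vec_eq_iff forall_3 matrix_matrix_mult_def sum_3) algebra

lemma exp_hat:
  assumes "x*x+y*y+z*z=1"
  shows "mat_exp (t *\<^sub>R hat x y z) = rodm x y z (cos t) (sin t)"
  unfolding mat_exp_rodrigues[OF hat_cube[OF assms]] using assms
  by (simp add: hat_def rodm_def vec_eq_iff forall_3 matrix_matrix_mult_def sum_3 mat_def) algebra



definition RA :: "real \<Rightarrow> real \<Rightarrow> real^3^3" where
  "RA C S = vector [vector [0, -1, 0], vector [C, 0, S], vector [-S, 0, C]]"
definition RB :: "real \<Rightarrow> real \<Rightarrow> real^3^3" where
  "RB C S = vector [vector [0, -C, S], vector [1, 0, 0], vector [0, S, C]]"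
definition Rx :: "real \<Rightarrow> real^3^3" where
  "Rx \<phi> = vector [vector [1, 0, 0], vector [0, cos \<phi>, sin \<phi>], vector [0, - sin \<phi>, cos \<phi>]]"

lemma rod_cases:
  fixes p q c s C S D :: real
  assumes h: "2*p*p + q*q = 1" and hD: "D = 1 + q*q" "D \<noteq> 0"
    and hc: "c*D = q*q-1" and hs: "s*D = 2*q" and hC: "C*D = 3*q*q-1" and hS: "S*D = -4*p*q"
  shows "rodm p (-p) q c s = RA C S"
    and "rodm (-p) (-p) q c s = RB C S"
    and "rodm (-p) p q c s = RA C (-S)"
    and "rodm p p q c s = RB C (-S)"
proof -
  show "rodm p (-p) q c s = RA C S"
    unfolding rodm_def RA_def vec_eq_iff forall_3 vector_3
    apply (intro conjI)
    apply (use h hD hc hs hC hS in algebra)+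
    done
  show "rodm (-p) (-p) q c s = RB C S"
    unfolding rodm_def RB_def vec_eq_iff forall_3 vector_3
    apply (intro conjI)
    apply (use h hD hc hs hC hS in algebra)+
    done
  show "rodm (-p) p q c s = RA C (-S)"
    unfolding rodm_def RA_def vec_eq_iff forall_3 vector_3
    apply (intro conjI)
    apply (use h hD hc hs hC hS in algebra)+
    done
  show "rodm p p q c s = RB C (-S)"
    unfolding rodm_def RB_def vec_eq_iff forall_3 vector_3
    apply (intro conjI)
    apply (use h hD hc hs hC hS in algebra)+
    done
qed

lemma prod4: "RA (cos t) (sin t) ** RB (cos t) (sin t) ** RA (cos t) (- sin t) ** RB (cos t) (- sin t) = Rx (4*t)"
proof -
  have c4: "cos (4*t) = cos (2*t) * cos (2*t) - sin (2*t) * sin (2*t)"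
    using cos_add[of "2*t" "2*t"] by simp
  have s4: "sin (4*t) = 2 * sin (2*t) * cos (2*t)"
    using sin_add[of "2*t" "2*t"] by simp
  have c2: "cos (2*t) = cos t * cos t - sin t * sin t" using cos_add[of t t] by simp
  have s2: "sin (2*t) = 2 * sin t * cos t" using sin_add[of t t] by simp
  have sc: "sin t * sin t + cos t * cos t = 1" using sin_cos_squared_add[of t] by (simp add: power2_eq_square)
  show ?thesis
    unfolding Rx_def c4 s4 c2 s2
    apply (simp add: RA_def RB_def vec_eq_iff forall_3 matrix_matrix_mult_def sum_3)
    apply (intro conjI)
    apply (use sc in algebra)+
    done
qed



lemma Rx_mult: "Rx a ** Rx b = Rx (a + b)"
  by (simp add: Rx_def vec_eq_iff forall_3 matrix_matrix_mult_def sum_3 sin_add cos_add algebra_simps)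

lemma Rx_0: "Rx 0 = mat 1"
  by (simp add: Rx_def vec_eq_iff forall_3 mat_def)

lemma Rx_pow: "mat_pow (Rx a) n = Rx (real n * a)"
  by (induction n) (simp_all add: Rx_0 Rx_mult algebra_simps)

lemma matrix_inv_eq:
  fixes A B :: "real^'n^'n"
  assumes "A ** B = mat 1" "B ** A = mat 1"
  shows "matrix_inv A = B"
proof -
  have "\<exists>A'. A ** A' = mat 1 \<and> A' ** A = mat 1" using assms by blast
  then have h: "A ** matrix_inv A = mat 1 \<and> matrix_inv A ** A = mat 1"
    unfolding matrix_inv_def by (rule someI_ex)
  have "matrix_inv A = matrix_inv A ** (A ** B)" using assms by simp
  also have "\<dots> = (matrix_inv A ** A) ** B" by (simp add: matrix_mul_assoc)
  also have "\<dots> = B" using h by simp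
  finally show ?thesis .
qed

lemma Rx_inv: "matrix_inv (Rx a) = Rx (- a)"
  by (rule matrix_inv_eq) (simp_all add: Rx_mult Rx_0)

lemma Rx_zpow: "mat_zpow (Rx a) n = Rx (of_int n * a)"
proof (cases "0 \<le> n")
  case True
  then show ?thesis by (simp add: mat_zpow_def Rx_pow)
next
  case False
  then have "real (nat (- n)) * (- a) = of_int n * a" by simp
  then show ?thesis using False by (simp add: mat_zpow_def Rx_pow Rx_inv)
qed

lemma Rx_vec: "Rx a *v vector [0, sin b, cos b] = vector [0, sin (b + a), cos (b + a)]"
  by (simp add: Rx_def vec_eq_iff forall_3 matrix_vector_mult_def sum_3 sin_add cos_add algebra_simps)

lemma RA_N: "RA C S *v Npole = vector [0, S, C]"
  by (simp add: RA_def Npole_def vec_eq_iff forall_3 matrix_vector_mult_def sum_3)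



lemma vdur_val:
  fixes u w y z kk :: real
  assumes u: "sin \<alpha> = u" and w: "cos \<alpha> = w" and y: "sin s = y" and z: "cos s = z"
   and num: "(2*u*w)\<^sup>2 - 8*w*u\<^sup>2*y - 2*(2*u*w)\<^sup>2*z - 4*u^4*(z\<^sup>2-y\<^sup>2)
       = kk * (5 + 2*(w\<^sup>2-u\<^sup>2) + ((w\<^sup>2-u\<^sup>2)\<^sup>2-(2*u*w)\<^sup>2) - 8*w*u\<^sup>2*y + 2*(2*u*w)\<^sup>2*z)"
   and den: "5 + 2*(w\<^sup>2-u\<^sup>2) + ((w\<^sup>2-u\<^sup>2)\<^sup>2-(2*u*w)\<^sup>2) - 8*w*u\<^sup>2*y + 2*(2*u*w)\<^sup>2*z \<noteq> 0"
  shows "vdur s \<alpha> = arccos kk"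
proof -
  have e1: "sin (2*\<alpha>) = 2*u*w" by (simp add: sin_double u w)
  have e2: "cos (2*\<alpha>) = w\<^sup>2-u\<^sup>2" by (simp add: cos_double u w)
  have e3: "cos (4*\<alpha>) = (w\<^sup>2-u\<^sup>2)\<^sup>2-(2*u*w)\<^sup>2"
    using cos_double[of "2*\<alpha>"] e1 e2 by simp
  have e4: "cos (2* s) = z\<^sup>2-y\<^sup>2" by (simp add: cos_double y z)
  show ?thesis
    unfolding vdur_def Let_def e1 e2 e3 e4 u w y z
    using num den by (simp add: divide_eq_eq)
qed

lemma alpha_facts:
  assumes "0 < \<alpha>" "\<alpha> < pi/4"
  shows "sin \<alpha> > 0" "cos \<alpha> > 0" "(cos \<alpha>)\<^sup>2 > 1/2"
proof -
  show "sin \<alpha> > 0" using assms by (intro sin_gt_zero) (auto intro: order.strict_trans[OF _ pi_less_4])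
  show "cos \<alpha> > 0" using assms by (intro cos_gt_zero) auto
  have "cos (pi/4) < cos \<alpha>" using assms by (intro cos_monotone_0_pi) auto
  then have "sqrt 2 / 2 < cos \<alpha>" by (simp add: cos_45)
  then have "(sqrt 2 / 2)\<^sup>2 < (cos \<alpha>)\<^sup>2" by (intro power_strict_mono) auto
  then show "(cos \<alpha>)\<^sup>2 > 1/2" by (simp add: power_divide)
qed



lemma numden:
  fixes u w D k y :: real
  assumes h: "u\<^sup>2+w\<^sup>2=1" and hD: "D = 1+w\<^sup>2" "D \<noteq> 0" and hk: "k*D = -(u\<^sup>2)" and hy: "y*D = 2*w"
  shows "(2*u*w)\<^sup>2 - 8*w*u\<^sup>2*y - 2*(2*u*w)\<^sup>2*k - 4*u^4*(k\<^sup>2-y\<^sup>2)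
       = k * (5 + 2*(w\<^sup>2-u\<^sup>2) + ((w\<^sup>2-u\<^sup>2)\<^sup>2-(2*u*w)\<^sup>2) - 8*w*u\<^sup>2*y + 2*(2*u*w)\<^sup>2*k)"
    and "(5 + 2*(w\<^sup>2-u\<^sup>2) + ((w\<^sup>2-u\<^sup>2)\<^sup>2-(2*u*w)\<^sup>2) - 8*w*u\<^sup>2*y + 2*(2*u*w)\<^sup>2*k) * D = 4*(3*w\<^sup>2-1)\<^sup>2"
    and "(2*u*w)\<^sup>2 - 8*w*u\<^sup>2*0 - 2*(2*u*w)\<^sup>2*1 - 4*u^4*(1\<^sup>2-0\<^sup>2)
       = k * (5 + 2*(w\<^sup>2-u\<^sup>2) + ((w\<^sup>2-u\<^sup>2)\<^sup>2-(2*u*w)\<^sup>2) - 8*w*u\<^sup>2*0 + 2*(2*u*w)\<^sup>2*1)"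
    and "(5 + 2*(w\<^sup>2-u\<^sup>2) + ((w\<^sup>2-u\<^sup>2)\<^sup>2-(2*u*w)\<^sup>2) - 8*w*u\<^sup>2*0 + 2*(2*u*w)\<^sup>2*1) = 4*D"
proof -
  show "(2*u*w)\<^sup>2 - 8*w*u\<^sup>2*y - 2*(2*u*w)\<^sup>2*k - 4*u^4*(k\<^sup>2-y\<^sup>2)
       = k * (5 + 2*(w\<^sup>2-u\<^sup>2) + ((w\<^sup>2-u\<^sup>2)\<^sup>2-(2*u*w)\<^sup>2) - 8*w*u\<^sup>2*y + 2*(2*u*w)\<^sup>2*k)"
    using assms by algebra
  show "(5 + 2*(w\<^sup>2-u\<^sup>2) + ((w\<^sup>2-u\<^sup>2)\<^sup>2-(2*u*w)\<^sup>2) - 8*w*u\<^sup>2*y + 2*(2*u*w)\<^sup>2*k) * D = 4*(3*w\<^sup>2-1)\<^sup>2"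
    using assms by algebra
  have a: "(2*u*w)\<^sup>2 - 2*(2*u*w)\<^sup>2 - 4*u^4 = k * (5 + 2*(w\<^sup>2-u\<^sup>2) + ((w\<^sup>2-u\<^sup>2)\<^sup>2-(2*u*w)\<^sup>2) + 2*(2*u*w)\<^sup>2)"
    using assms by algebra
  then show "(2*u*w)\<^sup>2 - 8*w*u\<^sup>2*0 - 2*(2*u*w)\<^sup>2*1 - 4*u^4*(1\<^sup>2-0\<^sup>2)
       = k * (5 + 2*(w\<^sup>2-u\<^sup>2) + ((w\<^sup>2-u\<^sup>2)\<^sup>2-(2*u*w)\<^sup>2) - 8*w*u\<^sup>2*0 + 2*(2*u*w)\<^sup>2*1)"
    by simp
  have b: "5 + 2*(w\<^sup>2-u\<^sup>2) + ((w\<^sup>2-u\<^sup>2)\<^sup>2-(2*u*w)\<^sup>2) + 2*(2*u*w)\<^sup>2 = 4*D"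
    using assms by algebra
  then show "(5 + 2*(w\<^sup>2-u\<^sup>2) + ((w\<^sup>2-u\<^sup>2)\<^sup>2-(2*u*w)\<^sup>2) - 8*w*u\<^sup>2*0 + 2*(2*u*w)\<^sup>2*1) = 4*D"
    by simp
qed



theorem proposition6:
  fixes n :: int and \<alpha> :: real
  assumes "0 < \<alpha>" and "\<alpha> < pi / 4"
  shows "mat_zpow (Mbar (pi / 4) 0 \<alpha>) n *v Npole
           = vector [0, sin (4 * of_int n * theta \<alpha>), cos (4 * of_int n * theta \<alpha>)]
       \<and> mat_zpow (Mbar (pi / 4) (s_max \<alpha>) \<alpha>) n *v (mat_exp (s_max \<alpha> *\<^sub>R Xm 1 1 \<alpha> (pi / 4)) *v Npole)
           = vector [0, sin ((4 * of_int n + 1) * theta \<alpha>), cos ((4 * of_int n + 1) * theta \<alpha>)]"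
proof -
  define u where "u = sin \<alpha>"
  define w where "w = cos \<alpha>"
  define D where "D = 1 + w\<^sup>2"
  define k where "k = - u\<^sup>2 / D"
  define p where "p = u * (sqrt 2 / 2)"
  define S0 where "S0 = - 2 * sqrt 2 * u * w / D"
  have u0: "u > 0" and w0: "w > 0" and w2: "w\<^sup>2 > 1/2"
    using alpha_facts[OF assms] unfolding u_def w_def by auto
  have h1: "u\<^sup>2 + w\<^sup>2 = 1" unfolding u_def w_def by simp
  have Dpos: "D > 0" unfolding D_def by (simp add: add_pos_nonneg)
  then have Dnz: "D \<noteq> 0" by simp
  have kD: "k * D = - u\<^sup>2" unfolding k_def using Dnz by simp
  have smax: "s_max \<alpha> = arccos k" unfolding s_max_def k_def D_def u_def w_def by simp
  have kb: "-1 \<le> k" "k \<le> 1"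
  proof -
    have "u\<^sup>2 \<le> D" using h1 unfolding D_def by (smt (verit) zero_le_power2)
    then show "-1 \<le> k" unfolding k_def using Dpos by (simp add: field_simps)
    show "k \<le> 1" unfolding k_def using Dpos by (simp add: field_simps) (smt (verit) zero_le_power2)
  qed
  have cs: "cos (s_max \<alpha>) = k" using kb smax by simp
  have ys: "(2*w/D) * D = 2*w" using Dnz by simp
  have ss: "sin (s_max \<alpha>) = 2*w/D"
  proof -
    have "sin (s_max \<alpha>) = sqrt (1 - k\<^sup>2)" unfolding smax using kb by (rule sin_arccos)
    also have "\<dots> = 2*w/D"
    proof (rule real_sqrt_unique)
      show "0 \<le> 2*w/D" using w0 Dpos by simp
      have "(2*w/D)\<^sup>2 * D\<^sup>2 = (1 - k\<^sup>2) * D\<^sup>2"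
        using h1 kD ys unfolding D_def by algebra
      then show "(2*w/D)\<^sup>2 = 1 - k\<^sup>2" using Dnz by simp
    qed
    finally show ?thesis .
  qed
  have v0: "vdur 0 \<alpha> = s_max \<alpha>"
    unfolding smax
    apply (rule vdur_val[of \<alpha> u w 0 0 1])
    using numden[OF h1 D_def Dnz kD ys] Dpos by (auto simp: u_def w_def)
  have v1: "vdur (s_max \<alpha>) \<alpha> = s_max \<alpha>"
  proof -
    have "3*w\<^sup>2 - 1 \<noteq> 0" using w2 by simp
    then have "4*(3*w\<^sup>2-1)\<^sup>2 \<noteq> 0" by simp
    then show ?thesis
      unfolding smax
      apply (intro vdur_val[of \<alpha> u w "arccos k" "2*w/D" k])
      using numden[OF h1 D_def Dnz kD ys] cs ss Dnz unfolding smax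
      by (auto simp: u_def w_def)
  qed
  have S0b: "1 - S0\<^sup>2 = ((3*w\<^sup>2-1)/D)\<^sup>2"
  proof -
    have "(1 - S0\<^sup>2) * D\<^sup>2 = ((3*w\<^sup>2-1)/D)\<^sup>2 * D\<^sup>2"
    proof -
      have sq: "(sqrt 2)\<^sup>2 = 2" by simp
      have "S0 * D = - 2 * sqrt 2 * u * w" unfolding S0_def using Dnz by simp
      moreover have "((3*w\<^sup>2-1)/D) * D = 3*w\<^sup>2-1" using Dnz by simp
      ultimately show ?thesis using sq h1 unfolding D_def by algebra
    qed
    then show ?thesis using Dnz by simp
  qed
  have S0le: "-1 \<le> S0" "S0 \<le> 1"
  proof -
    have "S0\<^sup>2 \<le> 1" using S0b by (smt (verit) zero_le_power2)
    then have "\<bar>S0\<bar> \<le> 1" by (simp add: abs_square_le_1)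
    then show "-1 \<le> S0" "S0 \<le> 1" by auto
  qed
  have th: "theta \<alpha> = arcsin S0" unfolding theta_def S0_def D_def u_def w_def by simp
  have sth: "sin (theta \<alpha>) = S0" unfolding th using S0le by simp
  have cnn: "0 \<le> (3*w\<^sup>2-1)/D" using w2 Dpos by simp
  have cth: "cos (theta \<alpha>) = (3*w\<^sup>2-1)/D"
    unfolding th cos_arcsin[OF S0le] S0b real_sqrt_abs using cnn by (simp only: abs_of_nonneg)
  have sq2: "sqrt 2 * sqrt 2 = 2" by simp
  have sD: "sin (theta \<alpha>) * D = -4*p*w"
    unfolding sth S0_def p_def using Dnz by (simp add: field_simps)
  have cD: "cos (theta \<alpha>) * D = 3*w*w-1"
    unfolding cth using Dnz by (simp add: field_simps power2_eq_square)
  have pp: "2*p*p + w*w = 1" unfolding p_def using h1 sq2 by (simp add: power2_eq_square field_simps)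
  have D': "D = 1 + w*w" unfolding D_def by (simp add: power2_eq_square)
  have kD': "k * D = w*w - 1" using kD h1 by (simp add: power2_eq_square) 
  note RC = rod_cases[OF pp D' Dnz kD' ys cD sD]
  have un1: "p*p + (-p)*(-p) + w*w = 1" and un2: "(-p)*(-p) + (-p)*(-p) + w*w = 1"
    and un3: "(-p)*(-p) + p*p + w*w = 1" and un4: "p*p + p*p + w*w = 1" using pp by auto
  have X1: "Xm 1 1 \<alpha> (pi/4) = hat p (-p) w" using Xm_hat[of 1 1 \<alpha>] by (simp add: p_def u_def w_def)
  have X2: "Xm (-1) 1 \<alpha> (pi/4) = hat (-p) (-p) w" using Xm_hat[of "-1" 1 \<alpha>] by (simp add: p_def u_def w_def)
  have X3: "Xm (-1) (-1) \<alpha> (pi/4) = hat (-p) p w" using Xm_hat[of "-1" "-1" \<alpha>] by (simp add: p_def u_def w_def)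
  have X4: "Xm 1 (-1) \<alpha> (pi/4) = hat p p w" using Xm_hat[of 1 "-1" \<alpha>] by (simp add: p_def u_def w_def)
  have E1: "mat_exp (s_max \<alpha> *\<^sub>R Xm 1 1 \<alpha> (pi/4)) = RA (cos (theta \<alpha>)) (sin (theta \<alpha>))"
    unfolding X1 exp_hat[OF un1] cs ss by (rule RC(1))
  have Mb: "Mbar (pi/4) s \<alpha> = Rx (4 * theta \<alpha>)" if "vdur s \<alpha> = s_max \<alpha>" for s
    unfolding Mbar_def that X1 X2 X3 X4 exp_hat[OF un1] exp_hat[OF un2] exp_hat[OF un3] exp_hat[OF un4]
      cs ss RC by (rule prod4)
  have N: "Npole = vector [0, sin 0, cos 0]" by (simp add: Npole_def)
  have a1: "0 + of_int n * (4 * theta \<alpha>) = 4 * of_int n * theta \<alpha>" by simp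
  have a2: "theta \<alpha> + of_int n * (4 * theta \<alpha>) = (4 * of_int n + 1) * theta \<alpha>" by (simp add: algebra_simps)
  show ?thesis
    unfolding Mb[OF v0] Mb[OF v1] Rx_zpow E1 RA_N
    by (simp only: N Rx_vec a1 a2 flip: sth cth)
qed

end
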